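(* Let $\mathcal{T}:L_2(X)\to L_2(Z)$, $\mathcal{T}h(Z)=\mathbb{E}[h(X)\mid Z]$, and let $\varphi:\mathcal{X}\to\mathbb{R}^d$, $\psi:\mathcal{Z}\to\mathbb{R}^d$ have components $\varphi_i\in L_2(X)$, $\psi_i\in L_2(Z)$. Let $\mathcal{T}_d(\varphi,\psi)=\sum_{i=1}^d\psi_i\otimes\varphi_i$. Then \[ \|\mathcal{T}_d(\varphi,\psi)\|_{\mathrm{HS}}^2-2\langle\mathcal{T}_d(\varphi,\psi),\mathcal{T}\rangle_{\mathrm{HS}}=\mathbb{E}_X\mathbb{E}_Z\big[(\varphi(X)^\top\psi(Z))^2\big]-2\,\mathbb{E}_{X,Z}\big[\varphi(X)^\top\psi(Z)\big]. \]
   Context: $L_2(X)=L_2(\mathcal{X},\pi_X)$, $L_2(Z)=L_2(\mathcal{Z},\pi_Z)$ where $\pi_X,\pi_Z$ are the laws of $X,Z$. For $g\in L_2(Z)$, $f\in L_2(X)$, $(g\otimes f)(h)=\langle h,f\rangle_{L_2(X)}g$. $\|\cdot\|_{\mathrm{HS}}$ and $\langle\cdot,\cdot\rangle_{\mathrm{HS}}$ are the Hilbert–Schmidt norm and inner product (the latter is well defined since $\mathcal{T}_d(\varphi,\psi)$ has finite rank). $\mathbb{E}_X\mathbb{E}_Z$ denotes expectation with $X$ and $Z$ drawn independently from their marginals, and $\mathbb{E}_{X,Z}$ expectation under the joint law. *)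

theory Defs
  imports "HOL-Probability.Probability"
begin

definition L2mem :: "'a measure \<Rightarrow> ('a \<Rightarrow> real) \<Rightarrow> bool" where
  "L2mem \<mu> f \<longleftrightarrow> f \<in> borel_measurable \<mu> \<and> integrable \<mu> (\<lambda>x. (f x)\<^sup>2)"

definition inner_L2 :: "'a measure \<Rightarrow> ('a \<Rightarrow> real) \<Rightarrow> ('a \<Rightarrow> real) \<Rightarrow> real" where
  "inner_L2 \<mu> f g = (\<integral>x. f x * g x \<partial>\<mu>)"

definition ONB_L2 :: "'a measure \<Rightarrow> ('i \<Rightarrow> 'a \<Rightarrow> real) \<Rightarrow> bool" where
  "ONB_L2 \<mu> e \<longleftrightarrow>
     (\<forall>k. L2mem \<mu> (e k)) \<and>
     (\<forall>k l. inner_L2 \<mu> (e k) (e l) = (if k = l then 1 else 0)) \<and>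
     (\<forall>f. L2mem \<mu> f \<and> (\<forall>k. inner_L2 \<mu> f (e k) = 0) \<longrightarrow> (AE x in \<mu>. f x = 0))"

text \<open>The conditional expectation operator T h = E[h(X) | Z], as an element of
  L2(Omega, sigma(Z), M) (identified with L2(Z)).\<close>
definition condT :: "'w measure \<Rightarrow> ('w \<Rightarrow> 'x) \<Rightarrow> ('w \<Rightarrow> 'z) \<Rightarrow> 'z measure
    \<Rightarrow> ('x \<Rightarrow> real) \<Rightarrow> ('w \<Rightarrow> real)" where
  "condT M X Z MZ h = real_cond_exp M (vimage_algebra (space M) Z MZ) (\<lambda>\<omega>. h (X \<omega>))"

text \<open>T_d(phi,psi) = sum_i psi_i \<otimes> phi_i, i.e. h \<mapsto> sum_i <h,phi_i>_{L2(X)} psi_i,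
  with psi_i viewed as the sigma(Z)-measurable function psi_i(Z).\<close>
definition Td :: "'w measure \<Rightarrow> ('w \<Rightarrow> 'x) \<Rightarrow> ('w \<Rightarrow> 'z) \<Rightarrow> 'x measure
    \<Rightarrow> ('x \<Rightarrow> real^'d) \<Rightarrow> ('z \<Rightarrow> real^'d) \<Rightarrow> ('x \<Rightarrow> real) \<Rightarrow> ('w \<Rightarrow> real)" where
  "Td M X Z MX \<phi> \<psi> h =
     (\<lambda>\<omega>. \<Sum>i\<in>UNIV. inner_L2 (distr M MX X) h (\<lambda>x. \<phi> x $ i) * (\<psi> (Z \<omega>) $ i))"

text \<open>Hilbert-Schmidt inner product <A,B>_HS = sum_k <A e_k, B e_k>_{L2(Z)} computed
  in an orthonormal basis e of L2(X).\<close>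
definition hs_inner :: "'w measure \<Rightarrow> ('i \<Rightarrow> 'x \<Rightarrow> real)
    \<Rightarrow> (('x \<Rightarrow> real) \<Rightarrow> ('w \<Rightarrow> real)) \<Rightarrow> (('x \<Rightarrow> real) \<Rightarrow> ('w \<Rightarrow> real)) \<Rightarrow> real" where
  "hs_inner M e A B = (\<Sum>\<^sub>\<infinity>k. inner_L2 M (A (e k)) (B (e k)))"

end

theory Submission
  imports Defs
begin

lemma abs_mult_le_sq: "\<bar>(a::real) * b\<bar> \<le> a\<^sup>2 + b\<^sup>2"
proof -
  have "0 \<le> (\<bar>a\<bar> - \<bar>b\<bar>)\<^sup>2" by simp
  then have "2 * (\<bar>a\<bar> * \<bar>b\<bar>) \<le> a\<^sup>2 + b\<^sup>2" by (simp add: power2_diff)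
  moreover have "\<bar>a\<bar> * \<bar>b\<bar> \<ge> 0" by simp
  ultimately have "\<bar>a\<bar> * \<bar>b\<bar> \<le> a\<^sup>2 + b\<^sup>2" by linarith
  then show ?thesis by (simp add: abs_mult)
qed

lemma L2_meas: "L2mem \<mu> f \<Longrightarrow> f \<in> borel_measurable \<mu>" by (simp add: L2mem_def)

lemma L2_prod_int:
  assumes "L2mem \<mu> f" "L2mem \<mu> g"
  shows "integrable \<mu> (\<lambda>x. f x * g x)"
proof -
  have [measurable]: "f \<in> borel_measurable \<mu>" "g \<in> borel_measurable \<mu>" using assms by (auto simp: L2mem_def)
  have "integrable \<mu> (\<lambda>x. (f x)\<^sup>2 + (g x)\<^sup>2)" using assms by (auto simp: L2mem_def)
  then show ?thesis
  proof (rule Bochner_Integration.integrable_bound)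
    show "(\<lambda>x. f x * g x) \<in> borel_measurable \<mu>" by measurable
    show "AE x in \<mu>. norm (f x * g x) \<le> norm ((f x)\<^sup>2 + (g x)\<^sup>2)"
    proof (rule AE_I2)
      fix x
      show "norm (f x * g x) \<le> norm ((f x)\<^sup>2 + (g x)\<^sup>2)"
        using abs_mult_le_sq[of "f x" "g x"] by simp
    qed
  qed
qed

lemma L2_zero: "L2mem \<mu> (\<lambda>x. 0)" by (simp add: L2mem_def)

lemma L2_add:
  assumes "L2mem \<mu> f" "L2mem \<mu> g"
  shows "L2mem \<mu> (\<lambda>x. f x + g x)"
proof -
  have [measurable]: "f \<in> borel_measurable \<mu>" "g \<in> borel_measurable \<mu>" using assms by (auto simp: L2mem_def)
  have "integrable \<mu> (\<lambda>x. (f x)\<^sup>2 + 2 * (f x * g x) + (g x)\<^sup>2)"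
    using assms L2_prod_int[OF assms] unfolding L2mem_def
    by (intro Bochner_Integration.integrable_add integrable_mult_right) auto
  moreover have "(\<lambda>x. (f x + g x)\<^sup>2) = (\<lambda>x. (f x)\<^sup>2 + 2 * (f x * g x) + (g x)\<^sup>2)"
    by (simp add: power2_sum mult.assoc add_ac)
  ultimately show ?thesis unfolding L2mem_def by simp
qed

lemma L2_scale:
  assumes "L2mem \<mu> f"
  shows "L2mem \<mu> (\<lambda>x. c * f x)"
proof -
  have [measurable]: "f \<in> borel_measurable \<mu>" using assms by (simp add: L2mem_def)
  have "integrable \<mu> (\<lambda>x. c\<^sup>2 * (f x)\<^sup>2)" using assms by (simp add: L2mem_def)
  then show ?thesis unfolding L2mem_def by (simp add: power_mult_distrib)
qed

lemma L2_diff: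
  assumes "L2mem \<mu> f" "L2mem \<mu> g"
  shows "L2mem \<mu> (\<lambda>x. f x - g x)"
  using L2_add[OF assms(1) L2_scale[OF assms(2), of "-1"]] by simp

lemma L2_sum:
  assumes "finite S" "\<And>k. k \<in> S \<Longrightarrow> L2mem \<mu> (u k)"
  shows "L2mem \<mu> (\<lambda>x. \<Sum>k\<in>S. c k * u k x)"
  using assms
proof (induction S rule: finite_induct)
  case empty then show ?case by (simp add: L2_zero)
next
  case (insert a S)
  then show ?case by (simp add: L2_add L2_scale)
qed

lemma inner_sym: "inner_L2 \<mu> f g = inner_L2 \<mu> g f"
  unfolding inner_L2_def by (simp add: mult.commute)

lemma inner_nonneg: "0 \<le> inner_L2 \<mu> f f"
  unfolding inner_L2_def by simp

lemma inner_add_left: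
  assumes "L2mem \<mu> f" "L2mem \<mu> h" "L2mem \<mu> g"
  shows "inner_L2 \<mu> (\<lambda>x. f x + h x) g = inner_L2 \<mu> f g + inner_L2 \<mu> h g"
proof -
  have "(\<lambda>x. (f x + h x) * g x) = (\<lambda>x. f x * g x + h x * g x)" by (simp add: distrib_right)
  then show ?thesis unfolding inner_L2_def
    using Bochner_Integration.integral_add[OF L2_prod_int[OF assms(1,3)] L2_prod_int[OF assms(2,3)]]
    by simp
qed

lemma inner_diff_left:
  assumes "L2mem \<mu> f" "L2mem \<mu> h" "L2mem \<mu> g"
  shows "inner_L2 \<mu> (\<lambda>x. f x - h x) g = inner_L2 \<mu> f g - inner_L2 \<mu> h g"
proof -
  have "(\<lambda>x. (f x - h x) * g x) = (\<lambda>x. f x * g x - h x * g x)" by (simp add: left_diff_distrib)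
  then show ?thesis unfolding inner_L2_def
    using Bochner_Integration.integral_diff[OF L2_prod_int[OF assms(1,3)] L2_prod_int[OF assms(2,3)]]
    by simp
qed

lemma inner_diff_right:
  assumes "L2mem \<mu> f" "L2mem \<mu> h" "L2mem \<mu> g"
  shows "inner_L2 \<mu> g (\<lambda>x. f x - h x) = inner_L2 \<mu> g f - inner_L2 \<mu> g h"
  using inner_diff_left[OF assms] inner_sym by metis

lemma inner_scale_left:
  "inner_L2 \<mu> (\<lambda>x. c * f x) g = c * inner_L2 \<mu> f g"
  unfolding inner_L2_def by (simp add: mult.assoc)

lemma inner_sum_left:
  assumes "finite S" "\<And>k. k \<in> S \<Longrightarrow> L2mem \<mu> (u k)" "L2mem \<mu> g"
  shows "inner_L2 \<mu> (\<lambda>x. \<Sum>k\<in>S. c k * u k x) g = (\<Sum>k\<in>S. c k * inner_L2 \<mu> (u k) g)"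
proof -
  have eq: "(\<lambda>x. (\<Sum>k\<in>S. c k * u k x) * g x) = (\<lambda>x. \<Sum>k\<in>S. c k * (u k x * g x))"
    by (simp only: sum_distrib_right mult.assoc)
  have int: "integrable \<mu> (\<lambda>x. c k * (u k x * g x))" if "k \<in> S" for k
    using L2_prod_int[OF assms(2)[OF that] assms(3)] by (rule integrable_mult_right)
  have "inner_L2 \<mu> (\<lambda>x. \<Sum>k\<in>S. c k * u k x) g = (\<integral>x. (\<Sum>k\<in>S. c k * (u k x * g x)) \<partial>\<mu>)"
    unfolding inner_L2_def eq ..
  also have "\<dots> = (\<Sum>k\<in>S. (\<integral>x. c k * (u k x * g x) \<partial>\<mu>))"
    using int by (rule Bochner_Integration.integral_sum[where f="\<lambda>k x. c k * (u k x * g x)"])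
  also have "\<dots> = (\<Sum>k\<in>S. c k * inner_L2 \<mu> (u k) g)"
    unfolding inner_L2_def by (simp only: integral_mult_right_zero)
  finally show ?thesis .
qed

lemma inner_sum_right:
  assumes "finite S" "\<And>k. k \<in> S \<Longrightarrow> L2mem \<mu> (u k)" "L2mem \<mu> g"
  shows "inner_L2 \<mu> g (\<lambda>x. \<Sum>k\<in>S. c k * u k x) = (\<Sum>k\<in>S. c k * inner_L2 \<mu> g (u k))"
proof -
  have "inner_L2 \<mu> g (\<lambda>x. \<Sum>k\<in>S. c k * u k x) = inner_L2 \<mu> (\<lambda>x. \<Sum>k\<in>S. c k * u k x) g"
    by (rule inner_sym)
  also have "\<dots> = (\<Sum>k\<in>S. c k * inner_L2 \<mu> (u k) g)" by (rule inner_sum_left[OF assms])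
  also have "\<dots> = (\<Sum>k\<in>S. c k * inner_L2 \<mu> g (u k))" by (simp only: inner_sym[of \<mu> _ g])
  finally show ?thesis .
qed

lemma quad_discr:
  fixes a b c :: real
  assumes "\<And>t. 0 \<le> a - 2 * t * b + t\<^sup>2 * c" "0 \<le> a" "0 \<le> c"
  shows "b\<^sup>2 \<le> a * c"
proof (cases "c = 0")
  case True
  show ?thesis
  proof (rule ccontr)
    assume "\<not> ?thesis"
    then have "b \<noteq> 0" using True by simp
    have "0 \<le> a - 2 * ((a + 1) / (2 * b)) * b" using assms(1)[of "(a+1)/(2*b)"] True by simp
    also have "2 * ((a + 1) / (2 * b)) * b = a + 1" using \<open>b \<noteq> 0\<close> by simp
    finally show False by simp
  qed
next
  case False
  then have c: "c > 0" using assms by simp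
  have "0 \<le> a - 2 * (b / c) * b + (b/c)\<^sup>2 * c" by (rule assms(1))
  also have "(b/c)\<^sup>2 * c = b\<^sup>2 / c" using c by (simp add: power2_eq_square)
  also have "2 * (b / c) * b = 2 * (b\<^sup>2 / c)" by (simp add: power2_eq_square)
  finally have "b\<^sup>2 / c \<le> a" by simp
  then show ?thesis using c by (simp add: pos_divide_le_eq mult.commute)
qed

lemma cauchy_schwarz_L2:
  assumes f: "L2mem \<mu> f" and g: "L2mem \<mu> g"
  shows "(inner_L2 \<mu> f g)\<^sup>2 \<le> inner_L2 \<mu> f f * inner_L2 \<mu> g g"
proof (rule quad_discr)
  fix t
  have L: "L2mem \<mu> (\<lambda>x. t * g x)" by (rule L2_scale[OF g])
  have D: "L2mem \<mu> (\<lambda>x. f x - t * g x)" by (rule L2_diff[OF f L])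
  have 2: "inner_L2 \<mu> (\<lambda>x. t * g x) f = t * inner_L2 \<mu> f g"
    using inner_scale_left[of \<mu> t g f] inner_sym[of \<mu> g f] by simp
  have 1: "inner_L2 \<mu> f (\<lambda>x. t * g x) = t * inner_L2 \<mu> f g"
    using 2 inner_sym[of \<mu> f "\<lambda>x. t * g x"] by simp
  have 3: "inner_L2 \<mu> (\<lambda>x. t * g x) (\<lambda>x. t * g x) = t\<^sup>2 * inner_L2 \<mu> g g"
  proof -
    have "inner_L2 \<mu> (\<lambda>x. t * g x) (\<lambda>x. t * g x) = t * inner_L2 \<mu> g (\<lambda>x. t * g x)"
      by (rule inner_scale_left)
    also have "inner_L2 \<mu> g (\<lambda>x. t * g x) = inner_L2 \<mu> (\<lambda>x. t * g x) g"
      by (rule inner_sym)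
    also have "\<dots> = t * inner_L2 \<mu> g g" by (rule inner_scale_left)
    finally show ?thesis by (simp add: power2_eq_square)
  qed
  have "0 \<le> inner_L2 \<mu> (\<lambda>x. f x - t * g x) (\<lambda>x. f x - t * g x)" by (rule inner_nonneg)
  also have "\<dots> = inner_L2 \<mu> f (\<lambda>x. f x - t * g x) - inner_L2 \<mu> (\<lambda>x. t * g x) (\<lambda>x. f x - t * g x)"
    by (rule inner_diff_left[OF f L D])
  also have "\<dots> = (inner_L2 \<mu> f f - inner_L2 \<mu> f (\<lambda>x. t * g x))
      - (inner_L2 \<mu> (\<lambda>x. t * g x) f - inner_L2 \<mu> (\<lambda>x. t * g x) (\<lambda>x. t * g x))"
    by (simp only: inner_diff_right[OF f L f] inner_diff_right[OF f L L])
  also have "\<dots> = inner_L2 \<mu> f f - 2 * t * inner_L2 \<mu> f g + t\<^sup>2 * inner_L2 \<mu> g g"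
    by (simp only: 1 2 3)
  finally show "0 \<le> inner_L2 \<mu> f f - 2 * t * inner_L2 \<mu> f g + t\<^sup>2 * inner_L2 \<mu> g g" .
qed (rule inner_nonneg)+

lemma bessel_id:
  assumes S: "finite S" and u: "\<And>k. k \<in> S \<Longrightarrow> L2mem \<mu> (u k)"
    and orth: "\<And>k l. k \<in> S \<Longrightarrow> l \<in> S \<Longrightarrow> inner_L2 \<mu> (u k) (u l) = (if k = l then 1 else 0)"
    and f: "L2mem \<mu> f"
  shows "inner_L2 \<mu> (\<lambda>x. f x - (\<Sum>k\<in>S. inner_L2 \<mu> (u k) f * u k x)) (\<lambda>x. f x - (\<Sum>k\<in>S. inner_L2 \<mu> (u k) f * u k x))
         = inner_L2 \<mu> f f - (\<Sum>k\<in>S. (inner_L2 \<mu> (u k) f)\<^sup>2)"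
proof -
  define c where "c k = inner_L2 \<mu> (u k) f" for k
  define P where "P = (\<lambda>x. \<Sum>k\<in>S. c k * u k x)"
  have LP: "L2mem \<mu> P" unfolding P_def by (rule L2_sum[OF S u])
  have Pu: "inner_L2 \<mu> P (u l) = c l" if l: "l \<in> S" for l
  proof -
    have "inner_L2 \<mu> P (u l) = (\<Sum>k\<in>S. c k * inner_L2 \<mu> (u k) (u l))"
      unfolding P_def by (rule inner_sum_left[OF S u u[OF l]])
    also have "\<dots> = (\<Sum>k\<in>S. (if k = l then c k else 0))"
      by (rule sum.cong) (auto simp: orth l)
    also have "\<dots> = c l" using S l by simp
    finally show ?thesis .
  qed
  have Pf: "inner_L2 \<mu> P f = (\<Sum>k\<in>S. (c k)\<^sup>2)"
  proof -
    have "inner_L2 \<mu> P f = (\<Sum>k\<in>S. c k * inner_L2 \<mu> (u k) f)"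
      unfolding P_def by (rule inner_sum_left[OF S u f])
    then show ?thesis by (simp add: c_def power2_eq_square)
  qed
  have PP: "inner_L2 \<mu> P P = (\<Sum>k\<in>S. (c k)\<^sup>2)"
  proof -
    have "inner_L2 \<mu> P P = (\<Sum>k\<in>S. c k * inner_L2 \<mu> (u k) P)"
      by (subst (1) P_def) (rule inner_sum_left[OF S u LP])
    also have "\<dots> = (\<Sum>k\<in>S. (c k)\<^sup>2)"
      by (rule sum.cong) (simp_all add: inner_sym[of \<mu> _ P] Pu power2_eq_square)
    finally show ?thesis .
  qed
  have fP: "inner_L2 \<mu> f P = (\<Sum>k\<in>S. (c k)\<^sup>2)" using Pf inner_sym[of \<mu> f P] by simp
  have D: "L2mem \<mu> (\<lambda>x. f x - P x)" by (rule L2_diff[OF f LP])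
  have "inner_L2 \<mu> (\<lambda>x. f x - P x) (\<lambda>x. f x - P x)
      = inner_L2 \<mu> f (\<lambda>x. f x - P x) - inner_L2 \<mu> P (\<lambda>x. f x - P x)"
    by (rule inner_diff_left[OF f LP D])
  also have "\<dots> = (inner_L2 \<mu> f f - inner_L2 \<mu> f P) - (inner_L2 \<mu> P f - inner_L2 \<mu> P P)"
    by (simp only: inner_diff_right[OF f LP f] inner_diff_right[OF f LP LP])
  also have "\<dots> = inner_L2 \<mu> f f - (\<Sum>k\<in>S. (c k)\<^sup>2)"
    by (simp only: fP Pf PP)
  finally show ?thesis unfolding P_def c_def .
qed

lemma abs_inner_le:
  assumes "L2mem \<mu> f" "L2mem \<mu> g"
  shows "\<bar>inner_L2 \<mu> f g\<bar> \<le> sqrt (inner_L2 \<mu> f f * inner_L2 \<mu> g g)"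
proof -
  have "\<bar>inner_L2 \<mu> f g\<bar> = sqrt ((inner_L2 \<mu> f g)\<^sup>2)" by simp
  also have "\<dots> \<le> sqrt (inner_L2 \<mu> f f * inner_L2 \<mu> g g)"
    by (rule real_sqrt_le_mono[OF cauchy_schwarz_L2[OF assms]])
  finally show ?thesis .
qed

lemma inner_limit:
  assumes g: "L2mem \<mu> g" and h: "L2mem \<mu> h" and S: "eventually (\<lambda>n. L2mem \<mu> (S n)) F"
    and lim: "((\<lambda>n. inner_L2 \<mu> (\<lambda>x. g x - S n x) (\<lambda>x. g x - S n x)) \<longlongrightarrow> 0) F"
  shows "((\<lambda>n. inner_L2 \<mu> (S n) h) \<longlongrightarrow> inner_L2 \<mu> g h) F"
proof -
  have "((\<lambda>n. inner_L2 \<mu> (S n) h - inner_L2 \<mu> g h) \<longlongrightarrow> 0) F"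
  proof (rule Lim_null_comparison)
    show "eventually (\<lambda>n. norm (inner_L2 \<mu> (S n) h - inner_L2 \<mu> g h)
        \<le> sqrt (inner_L2 \<mu> (\<lambda>x. g x - S n x) (\<lambda>x. g x - S n x) * inner_L2 \<mu> h h)) F"
      using S
    proof eventually_elim
      case (elim n)
      have "norm (inner_L2 \<mu> (S n) h - inner_L2 \<mu> g h) = \<bar>inner_L2 \<mu> (\<lambda>x. g x - S n x) h\<bar>"
        using inner_diff_left[OF g elim h] by simp
      also have "\<dots> \<le> sqrt (inner_L2 \<mu> (\<lambda>x. g x - S n x) (\<lambda>x. g x - S n x) * inner_L2 \<mu> h h)"
        by (rule abs_inner_le[OF L2_diff[OF g elim] h])
      finally show ?case .
    qed
    have "((\<lambda>n. sqrt (inner_L2 \<mu> (\<lambda>x. g x - S n x) (\<lambda>x. g x - S n x) * inner_L2 \<mu> h h))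
        \<longlongrightarrow> sqrt (0 * inner_L2 \<mu> h h)) F"
      by (intro tendsto_real_sqrt tendsto_mult lim tendsto_const)
    then show "((\<lambda>n. sqrt (inner_L2 \<mu> (\<lambda>x. g x - S n x) (\<lambda>x. g x - S n x) * inner_L2 \<mu> h h))
        \<longlongrightarrow> 0) F" by simp
  qed
  then show ?thesis by (rule LIM_zero_cancel)
qed

lemma ortho_has_sum:
  assumes E: "\<And>k. L2mem N (E k)"
    and orth: "\<And>k l. inner_L2 N (E k) (E l) = (if k = l then 1 else 0)"
    and F: "L2mem N F" and G: "L2mem N G"
    and pars: "((\<lambda>k. (inner_L2 N (E k) F)\<^sup>2) has_sum inner_L2 N F F) UNIV"
  shows "((\<lambda>k. inner_L2 N (E k) F * inner_L2 N (E k) G) has_sum inner_L2 N F G) UNIV"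
proof -
  define P where "P S = (\<lambda>x. \<Sum>k\<in>S. inner_L2 N (E k) F * E k x)" for S
  have fin: "eventually (\<lambda>S. finite S) (finite_subsets_at_top (UNIV :: 'a set))"
    by (rule eventually_finite_subsets_at_top_weakI) simp
  have "((\<lambda>S. inner_L2 N (P S) G) \<longlongrightarrow> inner_L2 N F G) (finite_subsets_at_top UNIV)"
  proof (rule inner_limit[OF F G])
    show "eventually (\<lambda>S. L2mem N (P S)) (finite_subsets_at_top UNIV)"
      using fin by eventually_elim (unfold P_def, rule L2_sum[OF _ E])
    have s: "((\<lambda>S. sum (\<lambda>k. (inner_L2 N (E k) F)\<^sup>2) S) \<longlongrightarrow> inner_L2 N F F) (finite_subsets_at_top UNIV)"
      using pars by (simp add: has_sum_def)
    have "((\<lambda>S. inner_L2 N F F - sum (\<lambda>k. (inner_L2 N (E k) F)\<^sup>2) S) \<longlongrightarrow> inner_L2 N F F - inner_L2 N F F)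
        (finite_subsets_at_top UNIV)"
      by (intro tendsto_diff tendsto_const s)
    then have s2: "((\<lambda>S. inner_L2 N F F - sum (\<lambda>k. (inner_L2 N (E k) F)\<^sup>2) S) \<longlongrightarrow> 0)
        (finite_subsets_at_top UNIV)" by simp
    show "((\<lambda>S. inner_L2 N (\<lambda>x. F x - P S x) (\<lambda>x. F x - P S x)) \<longlongrightarrow> 0) (finite_subsets_at_top UNIV)"
    proof (rule Lim_transform_eventually[OF s2])
      show "eventually (\<lambda>S. inner_L2 N F F - sum (\<lambda>k. (inner_L2 N (E k) F)\<^sup>2) S
          = inner_L2 N (\<lambda>x. F x - P S x) (\<lambda>x. F x - P S x)) (finite_subsets_at_top UNIV)"
        using fin
      proof eventually_elim
        case (elim S)
        show ?case unfolding P_def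
          by (rule bessel_id[OF elim E orth F, symmetric])
      qed
    qed
  qed
  moreover have "eventually (\<lambda>S. inner_L2 N (P S) G = sum (\<lambda>k. inner_L2 N (E k) F * inner_L2 N (E k) G) S)
      (finite_subsets_at_top UNIV)"
    using fin
  proof eventually_elim
    case (elim S)
    show ?case unfolding P_def by (rule inner_sum_left[OF elim E G])
  qed
  ultimately have "((\<lambda>S. sum (\<lambda>k. inner_L2 N (E k) F * inner_L2 N (E k) G) S) \<longlongrightarrow> inner_L2 N F G)
      (finite_subsets_at_top UNIV)"
    by (rule Lim_transform_eventually)
  then show ?thesis by (simp add: has_sum_def)
qed

lemma sq_diff_swap: "((a::real) - b) * (a - b) = (b - a) * (b - a)"
  by (simp add: algebra_simps)

lemma norm_ortho_sum:
  assumes A: "finite A" and u: "\<And>k. k \<in> A \<Longrightarrow> L2mem \<mu> (u k)"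
    and orth: "\<And>k l. k \<in> A \<Longrightarrow> l \<in> A \<Longrightarrow> inner_L2 \<mu> (u k) (u l) = (if k = l then 1 else 0)"
  shows "inner_L2 \<mu> (\<lambda>x. \<Sum>k\<in>A. d k * u k x) (\<lambda>x. \<Sum>k\<in>A. d k * u k x) = (\<Sum>k\<in>A. (d k)\<^sup>2)"
proof -
  define P where "P = (\<lambda>x. \<Sum>k\<in>A. d k * u k x)"
  have LP: "L2mem \<mu> P" unfolding P_def by (rule L2_sum[OF A u])
  have Pu: "inner_L2 \<mu> P (u l) = d l" if l: "l \<in> A" for l
  proof -
    have "inner_L2 \<mu> P (u l) = (\<Sum>k\<in>A. d k * inner_L2 \<mu> (u k) (u l))"
      unfolding P_def by (rule inner_sum_left[OF A u u[OF l]])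
    also have "\<dots> = (\<Sum>k\<in>A. (if k = l then d k else 0))"
      by (rule sum.cong) (auto simp: orth l)
    also have "\<dots> = d l" using A l by simp
    finally show ?thesis .
  qed
  have "inner_L2 \<mu> P P = (\<Sum>k\<in>A. d k * inner_L2 \<mu> (u k) P)"
    by (subst (1) P_def) (rule inner_sum_left[OF A u LP])
  also have "\<dots> = (\<Sum>k\<in>A. (d k)\<^sup>2)"
    by (rule sum.cong) (simp_all add: inner_sym[of \<mu> _ P] Pu power2_eq_square)
  finally show ?thesis unfolding P_def .
qed

lemma ortho_series_limit:
  assumes prob: "prob_space \<mu>"
    and u: "\<And>m. L2mem \<mu> (u m)"
    and orth: "\<And>m n. inner_L2 \<mu> (u m) (u n) = (if m = n then 1 else 0)"
    and sd: "summable (\<lambda>m. (d m)\<^sup>2)"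
  shows "\<exists>g. L2mem \<mu> g \<and> ((\<lambda>n. inner_L2 \<mu> (\<lambda>x. g x - (\<Sum>m<n. d m * u m x)) (\<lambda>x. g x - (\<Sum>m<n. d m * u m x))) \<longlonglongrightarrow> 0)"
proof -
  interpret prob_space \<mu> by (rule prob)
  define S where "S n = (\<lambda>x. \<Sum>m<n. d m * u m x)" for n
  have LS: "L2mem \<mu> (S n)" for n unfolding S_def by (rule L2_sum) (auto intro: u)
  have [measurable]: "S n \<in> borel_measurable \<mu>" for n using LS L2_meas by blast
  define T where "T a = suminf (\<lambda>m. (d m)\<^sup>2) - (\<Sum>m<a. (d m)\<^sup>2)" for a
  have T0: "0 \<le> T a" for a
    unfolding T_def using sum_le_suminf[OF sd, of "{..<a}"] by auto
  have Tlim: "T \<longlonglongrightarrow> 0"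
  proof -
    have "(\<lambda>a. suminf (\<lambda>m. (d m)\<^sup>2) - (\<Sum>m<a. (d m)\<^sup>2)) \<longlonglongrightarrow> suminf (\<lambda>m. (d m)\<^sup>2) - suminf (\<lambda>m. (d m)\<^sup>2)"
      by (intro tendsto_diff tendsto_const summable_LIMSEQ[OF sd])
    then show ?thesis unfolding T_def[abs_def] by simp
  qed
  have Sdiff: "inner_L2 \<mu> (\<lambda>x. S b x - S a x) (\<lambda>x. S b x - S a x) = (\<Sum>m\<in>{a..<b}. (d m)\<^sup>2)"
    if ab: "a \<le> b" for a b
  proof -
    have "(\<lambda>x. S b x - S a x) = (\<lambda>x. \<Sum>m\<in>{a..<b}. d m * u m x)"
    proof
      fix x
      have "S b x = (\<Sum>m\<in>{0..<a}. d m * u m x) + (\<Sum>m\<in>{a..<b}. d m * u m x)"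
        unfolding S_def lessThan_atLeast0 using ab by (simp add: sum.atLeastLessThan_concat)
      then show "S b x - S a x = (\<Sum>m\<in>{a..<b}. d m * u m x)" unfolding S_def lessThan_atLeast0 by simp
    qed
    then show ?thesis using norm_ortho_sum[of "{a..<b}" \<mu> u d] u orth by simp
  qed
  have Sle: "(\<Sum>m\<in>{a..<b}. (d m)\<^sup>2) \<le> T a" if ab: "a \<le> b" for a b
  proof -
    have "(\<Sum>m<b. (d m)\<^sup>2) = (\<Sum>m<a. (d m)\<^sup>2) + (\<Sum>m\<in>{a..<b}. (d m)\<^sup>2)"
      using ab by (simp add: lessThan_atLeast0 sum.atLeastLessThan_concat)
    moreover have "(\<Sum>m<b. (d m)\<^sup>2) \<le> suminf (\<lambda>m. (d m)\<^sup>2)"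
      by (intro sum_le_suminf[OF sd]) auto
    ultimately show ?thesis unfolding T_def by linarith
  qed
  have Sab: "inner_L2 \<mu> (\<lambda>x. S b x - S a x) (\<lambda>x. S b x - S a x) \<le> T a + T b" for a b
  proof (cases "a \<le> b")
    case True then show ?thesis using Sdiff[OF True] Sle[OF True] T0[of b] by linarith
  next
    case False then have ba: "b \<le> a" by simp
    have "inner_L2 \<mu> (\<lambda>x. S b x - S a x) (\<lambda>x. S b x - S a x) = inner_L2 \<mu> (\<lambda>x. S a x - S b x) (\<lambda>x. S a x - S b x)"
      unfolding inner_L2_def by (simp only: sq_diff_swap)
    then show ?thesis using Sdiff[OF ba] Sle[OF ba] T0[of a] by linarith
  qed
  have "\<exists>n. T n \<le> (1/4)^j" for j
  proof -
    have "eventually (\<lambda>n. T n < (1/4)^j) sequentially" by (rule order_tendstoD(2)[OF Tlim]) simp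
    then obtain n where "T n < (1/4)^j" by (metis eventually_sequentially order_refl)
    then show ?thesis by (intro exI[of _ n]) simp
  qed
  then obtain N where N: "\<And>j. T (N j) \<le> (1/4)^j" by metis
  define D where "D j = (\<lambda>x. S (N (Suc j)) x - S (N j) x)" for j
  have LD: "L2mem \<mu> (D j)" for j unfolding D_def by (rule L2_diff[OF LS LS])
  have [measurable]: "D j \<in> borel_measurable \<mu>" for j using LD L2_meas by blast
  have Dn: "inner_L2 \<mu> (D j) (D j) \<le> 2 * (1/4)^j" for j
  proof -
    have "inner_L2 \<mu> (D j) (D j) \<le> T (N j) + T (N (Suc j))"
      unfolding D_def using Sab[of "N (Suc j)" "N j"] by simp
    also have "\<dots> \<le> (1/4)^j + (1/4)^(Suc j)" using N[of j] N[of "Suc j"] by linarith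
    also have "\<dots> \<le> 2 * (1/4)^j" by simp
    finally show ?thesis .
  qed
  have L1c: "L2mem \<mu> (\<lambda>x. 1)" unfolding L2mem_def by simp
  have La: "L2mem \<mu> (\<lambda>x. \<bar>D j x\<bar>)" for j using LD[of j] unfolding L2mem_def by simp
  have int_abs: "integrable \<mu> (\<lambda>x. \<bar>D j x\<bar>)" for j
    using L2_prod_int[OF La[of j] L1c] by simp
  have L1: "(\<integral>x. \<bar>D j x\<bar> \<partial>\<mu>) \<le> sqrt 2 * (1/2)^j" for j
  proof -
    have "(\<integral>x. \<bar>D j x\<bar> \<partial>\<mu>) = inner_L2 \<mu> (\<lambda>x. \<bar>D j x\<bar>) (\<lambda>x. 1)" unfolding inner_L2_def by simp
    also have "\<dots> \<le> \<bar>inner_L2 \<mu> (\<lambda>x. \<bar>D j x\<bar>) (\<lambda>x. 1)\<bar>" by simp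
    also have "\<dots> \<le> sqrt (inner_L2 \<mu> (\<lambda>x. \<bar>D j x\<bar>) (\<lambda>x. \<bar>D j x\<bar>) * inner_L2 \<mu> (\<lambda>x. 1) (\<lambda>x. 1))"
      by (rule abs_inner_le[OF La L1c])
    also have "inner_L2 \<mu> (\<lambda>x. \<bar>D j x\<bar>) (\<lambda>x. \<bar>D j x\<bar>) = inner_L2 \<mu> (D j) (D j)"
      unfolding inner_L2_def by simp
    also have "inner_L2 \<mu> (\<lambda>x. 1) (\<lambda>x. 1) = 1" unfolding inner_L2_def by (simp add: prob_space)
    also have "sqrt (inner_L2 \<mu> (D j) (D j) * 1) \<le> sqrt (2 * (1/4)^j)"
      using Dn[of j] by simp
    also have "(1/4::real)^j = ((1/2)^j)\<^sup>2"
      by (simp add: power2_eq_square flip: power_mult_distrib)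
    also have "sqrt (2 * ((1/2::real)^j)\<^sup>2) = sqrt 2 * (1/2)^j"
      by (simp add: real_sqrt_mult)
    finally show ?thesis .
  qed
  have nn: "(\<integral>\<^sup>+x. ennreal \<bar>D j x\<bar> \<partial>\<mu>) = ennreal (\<integral>x. \<bar>D j x\<bar> \<partial>\<mu>)" for j
    by (rule nn_integral_eq_integral[OF int_abs]) simp
  have sg: "summable (\<lambda>j. sqrt 2 * (1/2::real)^j)"
    by (intro summable_mult summable_geometric) simp
  have "(\<integral>\<^sup>+x. (\<Sum>j. ennreal \<bar>D j x\<bar>) \<partial>\<mu>) = (\<Sum>j. \<integral>\<^sup>+x. ennreal \<bar>D j x\<bar> \<partial>\<mu>)"
    by (rule nn_integral_suminf) measurable
  also have "\<dots> \<le> (\<Sum>j. ennreal (sqrt 2 * (1/2)^j))"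
    by (rule suminf_le) (simp_all add: nn L1)
  also have "\<dots> = ennreal (\<Sum>j. sqrt 2 * (1/2)^j)"
    by (rule suminf_ennreal2[OF _ sg]) simp
  finally have fin: "(\<integral>\<^sup>+x. (\<Sum>j. ennreal \<bar>D j x\<bar>) \<partial>\<mu>) \<noteq> \<infinity>"
    by (auto simp: top_unique)
  have "AE x in \<mu>. (\<Sum>j. ennreal \<bar>D j x\<bar>) \<noteq> \<infinity>"
    by (rule nn_integral_noteq_infinite[OF _ fin]) measurable
  then have AEs: "AE x in \<mu>. summable (\<lambda>j. \<bar>D j x\<bar>)"
    by eventually_elim (rule summable_suminf_not_top, auto)
  define g where "g x = lim (\<lambda>j. S (N j) x)" for x
  have [measurable]: "g \<in> borel_measurable \<mu>" unfolding g_def by measurable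
  have conv: "AE x in \<mu>. (\<lambda>j. S (N j) x) \<longlonglongrightarrow> g x"
    using AEs
  proof eventually_elim
    case (elim x)
    have "summable (\<lambda>j. D j x)" using elim by (rule summable_rabs_cancel)
    then have "convergent (\<lambda>j. \<Sum>i<j. D i x)" by (simp add: summable_iff_convergent)
    then have c: "convergent (\<lambda>j. S (N 0) x + (\<Sum>i<j. D i x))" by (simp add: convergent_add_const_iff)
    have "(\<lambda>j. S (N 0) x + (\<Sum>i<j. D i x)) = (\<lambda>j. S (N j) x)"
      by (rule ext) (simp add: D_def sum_lessThan_telescope[of "\<lambda>i. S (N i) x"])
    with c have "convergent (\<lambda>j. S (N j) x)" by simp
    then show ?case unfolding g_def by (simp add: convergent_LIMSEQ_iff)
  qed
  have bnd: "L2mem \<mu> (\<lambda>x. g x - S n x) \<and> inner_L2 \<mu> (\<lambda>x. g x - S n x) (\<lambda>x. g x - S n x) \<le> T n" for n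
  proof -
    define F where "F j x = ennreal ((S (N j) x - S n x)\<^sup>2)" for j x
    have [measurable]: "F j \<in> borel_measurable \<mu>" for j unfolding F_def by measurable
    have AEl: "AE x in \<mu>. ennreal ((g x - S n x)\<^sup>2) = liminf (\<lambda>j. F j x)"
      using conv
    proof eventually_elim
      case (elim x)
      have "(\<lambda>j. F j x) \<longlonglongrightarrow> ennreal ((g x - S n x)\<^sup>2)" unfolding F_def
        by (intro tendsto_ennrealI tendsto_power tendsto_diff elim tendsto_const)
      then have "liminf (\<lambda>j. F j x) = ennreal ((g x - S n x)\<^sup>2)"
        by (rule lim_imp_Liminf[OF trivial_limit_sequentially])
      then show ?case by simp
    qed
    have "(\<integral>\<^sup>+x. ennreal ((g x - S n x)\<^sup>2) \<partial>\<mu>) = (\<integral>\<^sup>+x. liminf (\<lambda>j. F j x) \<partial>\<mu>)"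
      by (rule nn_integral_cong_AE[OF AEl])
    also have "\<dots> \<le> liminf (\<lambda>j. \<integral>\<^sup>+x. F j x \<partial>\<mu>)"
      by (rule nn_integral_liminf) measurable
    also have "\<dots> \<le> liminf (\<lambda>j. ennreal (T n + (1/4)^j))"
    proof (rule Liminf_mono, rule always_eventually, rule allI)
      fix j
      have i: "integrable \<mu> (\<lambda>x. (S (N j) x - S n x) * (S (N j) x - S n x))"
        by (intro L2_prod_int L2_diff LS)
      have "(\<integral>\<^sup>+x. F j x \<partial>\<mu>) = ennreal (inner_L2 \<mu> (\<lambda>x. S (N j) x - S n x) (\<lambda>x. S (N j) x - S n x))"
        unfolding F_def inner_L2_def power2_eq_square
        by (rule nn_integral_eq_integral[OF i]) simp
      also have "\<dots> \<le> ennreal (T n + (1/4)^j)"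
        using Sab[of "N j" n] N[of j] by (intro ennreal_leI) linarith
      finally show "(\<integral>\<^sup>+x. F j x \<partial>\<mu>) \<le> ennreal (T n + (1/4)^j)" .
    qed
    also have "\<dots> = ennreal (T n)"
    proof (rule lim_imp_Liminf)
      show "(\<lambda>j. ennreal (T n + (1/4)^j)) \<longlonglongrightarrow> ennreal (T n)"
        using tendsto_ennrealI[OF tendsto_add[OF tendsto_const[of "T n"] LIMSEQ_power_zero[of "1/4::real"]]]
        by simp
    qed simp
    finally have I: "(\<integral>\<^sup>+x. ennreal ((g x - S n x)\<^sup>2) \<partial>\<mu>) \<le> ennreal (T n)" .
    have int: "integrable \<mu> (\<lambda>x. (g x - S n x)\<^sup>2)"
    proof (rule integrableI_bounded)
      show "(\<lambda>x. (g x - S n x)\<^sup>2) \<in> borel_measurable \<mu>" by measurable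
      have "(\<integral>\<^sup>+x. ennreal (norm ((g x - S n x)\<^sup>2)) \<partial>\<mu>) = (\<integral>\<^sup>+x. ennreal ((g x - S n x)\<^sup>2) \<partial>\<mu>)"
        by simp
      also have "\<dots> < \<infinity>" using I ennreal_less_top[of "T n"] unfolding infinity_ennreal_def by (rule le_less_trans)
      finally show "(\<integral>\<^sup>+x. ennreal (norm ((g x - S n x)\<^sup>2)) \<partial>\<mu>) < \<infinity>" .
    qed
    have L: "L2mem \<mu> (\<lambda>x. g x - S n x)" unfolding L2mem_def using int by simp
    have "ennreal (\<integral>x. (g x - S n x)\<^sup>2 \<partial>\<mu>) = (\<integral>\<^sup>+x. ennreal ((g x - S n x)\<^sup>2) \<partial>\<mu>)"
      by (rule nn_integral_eq_integral[OF int, symmetric]) simp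
    with I have "ennreal (\<integral>x. (g x - S n x)\<^sup>2 \<partial>\<mu>) \<le> ennreal (T n)" by simp
    then have "(\<integral>x. (g x - S n x)\<^sup>2 \<partial>\<mu>) \<le> T n" using T0[of n] by simp
    then show ?thesis using L unfolding inner_L2_def by (simp add: power2_eq_square)
  qed
  have Lg: "L2mem \<mu> g"
  proof -
    have "L2mem \<mu> (\<lambda>x. (g x - S 0 x) + S 0 x)" by (rule L2_add[OF conjunct1[OF bnd] LS])
    then show ?thesis by simp
  qed
  have "(\<lambda>n. inner_L2 \<mu> (\<lambda>x. g x - S n x) (\<lambda>x. g x - S n x)) \<longlonglongrightarrow> 0"
  proof (rule tendsto_sandwich[OF _ _ tendsto_const Tlim])
    show "\<forall>\<^sub>F n in sequentially. 0 \<le> inner_L2 \<mu> (\<lambda>x. g x - S n x) (\<lambda>x. g x - S n x)"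
      by (simp add: inner_nonneg)
    show "\<forall>\<^sub>F n in sequentially. inner_L2 \<mu> (\<lambda>x. g x - S n x) (\<lambda>x. g x - S n x) \<le> T n"
      using bnd by simp
  qed
  then show ?thesis using Lg unfolding S_def by blast
qed

lemma inner_zero_AE:
  assumes "AE x in \<mu>. h x = 0" "h \<in> borel_measurable \<mu>"
  shows "inner_L2 \<mu> h h = 0"
proof -
  have "inner_L2 \<mu> h h = (\<integral>x. 0 \<partial>\<mu>)" unfolding inner_L2_def
    by (rule integral_cong_AE) (use assms in auto)
  then show ?thesis by simp
qed

lemma inner_cong_AE:
  assumes "AE x in \<mu>. f x = g x" "f \<in> borel_measurable \<mu>" "g \<in> borel_measurable \<mu>"
  shows "inner_L2 \<mu> f f = inner_L2 \<mu> g g"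
  unfolding inner_L2_def by (rule integral_cong_AE) (use assms in auto)

lemma parseval:
  assumes prob: "prob_space \<mu>" and onb: "ONB_L2 \<mu> e" and f: "L2mem \<mu> f"
  shows "((\<lambda>k. (inner_L2 \<mu> (e k) f)\<^sup>2) has_sum inner_L2 \<mu> f f) UNIV"
proof -
  have e: "\<And>k. L2mem \<mu> (e k)"
    and orth: "\<And>k l. inner_L2 \<mu> (e k) (e l) = (if k = l then 1 else 0)"
    and compl: "\<And>h. L2mem \<mu> h \<Longrightarrow> (\<And>k. inner_L2 \<mu> h (e k) = 0) \<Longrightarrow> AE x in \<mu>. h x = 0"
    using onb unfolding ONB_L2_def by blast+
  define c where "c k = inner_L2 \<mu> (e k) f" for k
  have bes: "(\<Sum>k\<in>S. (c k)\<^sup>2) \<le> inner_L2 \<mu> f f" if S: "finite S" for S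
    using bessel_id[OF S e orth f] inner_nonneg[of \<mu> "\<lambda>x. f x - (\<Sum>k\<in>S. inner_L2 \<mu> (e k) f * e k x)"]
    unfolding c_def by linarith
  have summ: "(\<lambda>k. (c k)\<^sup>2) summable_on UNIV"
    by (rule nonneg_bdd_above_summable_on) (auto intro!: bdd_aboveI2 bes)
  define s where "s = infsum (\<lambda>k. (c k)\<^sup>2) UNIV"
  have hs: "((\<lambda>k. (c k)\<^sup>2) has_sum s) UNIV" unfolding s_def using summ by (rule has_sum_infsum)
  have le1: "s \<le> inner_L2 \<mu> f f" by (rule has_sum_le_finite_sums[OF hs]) (rule bes)
  have sub: "(\<Sum>k\<in>S. (c k)\<^sup>2) \<le> s" if "finite S" for S
    unfolding s_def by (rule finite_sum_le_infsum[OF summ that]) auto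
  have le2: "inner_L2 \<mu> f f \<le> s"
  proof -
    define K where "K = {k. c k \<noteq> 0}"
    have "countable {k \<in> UNIV. (c k)\<^sup>2 \<noteq> 0}" by (rule summable_countable_real[OF summ])
    then have cK: "countable K" unfolding K_def by simp
    show ?thesis
    proof (cases "finite K")
      case True
      define P where "P = (\<lambda>x. \<Sum>k\<in>K. c k * e k x)"
      have LP: "L2mem \<mu> P" unfolding P_def by (rule L2_sum[OF True e])
      have D: "L2mem \<mu> (\<lambda>x. f x - P x)" by (rule L2_diff[OF f LP])
      have "AE x in \<mu>. f x - P x = 0"
      proof (rule compl[OF D])
        fix l
        have "inner_L2 \<mu> P (e l) = (\<Sum>k\<in>K. c k * inner_L2 \<mu> (e k) (e l))"
          unfolding P_def by (rule inner_sum_left[OF True e e])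
        also have "\<dots> = (\<Sum>k\<in>K. (if k = l then c k else 0))"
          by (rule sum.cong) (simp_all add: orth)
        also have "\<dots> = (if l \<in> K then c l else 0)" using True by simp
        also have "\<dots> = c l" unfolding K_def by simp
        finally have Pl: "inner_L2 \<mu> P (e l) = c l" .
        have fl: "inner_L2 \<mu> f (e l) = c l" unfolding c_def by (rule inner_sym)
        show "inner_L2 \<mu> (\<lambda>x. f x - P x) (e l) = 0"
          using inner_diff_left[OF f LP e] Pl fl by simp
      qed
      then have "inner_L2 \<mu> (\<lambda>x. f x - P x) (\<lambda>x. f x - P x) = 0"
        by (rule inner_zero_AE) (use D L2_meas in blast)
      moreover have "inner_L2 \<mu> (\<lambda>x. f x - P x) (\<lambda>x. f x - P x) = inner_L2 \<mu> f f - (\<Sum>k\<in>K. (c k)\<^sup>2)"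
        unfolding P_def c_def by (rule bessel_id[OF True e orth f])
      ultimately have "inner_L2 \<mu> f f = (\<Sum>k\<in>K. (c k)\<^sup>2)" by simp
      also have "\<dots> \<le> s" by (rule sub[OF True])
      finally show ?thesis .
    next
      case False
      define r where "r = from_nat_into K"
      have bij: "bij_betw r UNIV K" unfolding r_def by (rule bij_betw_from_nat_into[OF cK False])
      have inj: "inj r" and rK: "\<And>m. r m \<in> K" using bij by (auto simp: bij_betw_def)
      have surj: "\<And>l. l \<in> K \<Longrightarrow> \<exists>m. r m = l" using bij by (auto simp: bij_betw_def)
      define u where "u m = e (r m)" for m
      define d where "d m = c (r m)" for m
      have u: "L2mem \<mu> (u m)" for m unfolding u_def by (rule e)
      have orthu: "inner_L2 \<mu> (u m) (u n) = (if m = n then 1 else 0)" for m n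
        unfolding u_def using orth inj by (simp add: inj_eq)
      have du: "d m = inner_L2 \<mu> (u m) f" for m unfolding d_def u_def c_def ..
      have psum: "(\<Sum>m<n. (d m)\<^sup>2) = (\<Sum>k\<in>r ` {..<n}. (c k)\<^sup>2)" for n
        using inj by (simp add: sum.reindex inj_on_subset d_def)
      have sd: "summable (\<lambda>m. (d m)\<^sup>2)"
        by (rule summableI_nonneg_bounded[where x = "inner_L2 \<mu> f f"]) (simp_all add: psum bes)
      define S where "S n = (\<lambda>x. \<Sum>m<n. d m * u m x)" for n
      obtain g where Lg: "L2mem \<mu> g"
        and glim: "(\<lambda>n. inner_L2 \<mu> (\<lambda>x. g x - S n x) (\<lambda>x. g x - S n x)) \<longlonglongrightarrow> 0"
        using ortho_series_limit[OF prob u orthu sd] unfolding S_def by blast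
      have LS: "L2mem \<mu> (S n)" for n unfolding S_def by (rule L2_sum) (auto intro: u)
      have Sl: "inner_L2 \<mu> (S n) (e l) = (\<Sum>m<n. d m * inner_L2 \<mu> (u m) (e l))" for n l
        unfolding S_def by (rule inner_sum_left) (auto intro: u e)
      have ge: "inner_L2 \<mu> g (e l) = c l" for l
      proof -
        have lim: "(\<lambda>n. inner_L2 \<mu> (S n) (e l)) \<longlonglongrightarrow> inner_L2 \<mu> g (e l)"
          by (rule inner_limit[OF Lg e _ glim]) (simp add: LS)
        show ?thesis
        proof (cases "l \<in> K")
          case True
          then obtain m0 where m0: "r m0 = l" using surj by blast
          have ev: "eventually (\<lambda>n. c l = inner_L2 \<mu> (S n) (e l)) sequentially"
          proof (rule eventually_sequentiallyI[of "Suc m0"])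
            fix n assume n: "Suc m0 \<le> n"
            have "inner_L2 \<mu> (S n) (e l) = (\<Sum>m<n. (if m = m0 then d m else 0))"
              unfolding Sl by (rule sum.cong) (auto simp: orthu u_def[symmetric] m0[symmetric])
            also have "\<dots> = d m0" using n by simp
            also have "\<dots> = c l" unfolding d_def m0 ..
            finally show "c l = inner_L2 \<mu> (S n) (e l)" by simp
          qed
          have "(\<lambda>n. inner_L2 \<mu> (S n) (e l)) \<longlonglongrightarrow> c l"
            by (rule Lim_transform_eventually[OF tendsto_const ev])
          then show ?thesis using lim LIMSEQ_unique by blast
        next
          case False
          then have cl: "c l = 0" unfolding K_def by simp
          have "inner_L2 \<mu> (S n) (e l) = 0" for n
          proof -
            have "inner_L2 \<mu> (S n) (e l) = (\<Sum>m<n. d m * 0)"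
              unfolding Sl
            proof (rule sum.cong)
              fix m
              have "r m \<noteq> l" using rK[of m] False by auto
              then show "d m * inner_L2 \<mu> (u m) (e l) = d m * 0" unfolding u_def by (simp add: orth)
            qed simp
            then show ?thesis by simp
          qed
          then have "(\<lambda>n. inner_L2 \<mu> (S n) (e l)) \<longlonglongrightarrow> 0" by simp
          then show ?thesis using lim LIMSEQ_unique cl by metis
        qed
      qed
      have D: "L2mem \<mu> (\<lambda>x. f x - g x)" by (rule L2_diff[OF f Lg])
      have AEfg: "AE x in \<mu>. f x - g x = 0"
      proof (rule compl[OF D])
        fix l
        have fl: "inner_L2 \<mu> f (e l) = c l" unfolding c_def by (rule inner_sym)
        show "inner_L2 \<mu> (\<lambda>x. f x - g x) (e l) = 0"
          using inner_diff_left[OF f Lg e] ge[of l] fl by simp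
      qed
      have [measurable]: "f \<in> borel_measurable \<mu>" "g \<in> borel_measurable \<mu>" "S n \<in> borel_measurable \<mu>" for n
        using f Lg LS L2_meas by blast+
      have eqn: "inner_L2 \<mu> f f - (\<Sum>m<n. (d m)\<^sup>2) = inner_L2 \<mu> (\<lambda>x. g x - S n x) (\<lambda>x. g x - S n x)" for n
      proof -
        have "inner_L2 \<mu> (\<lambda>x. f x - S n x) (\<lambda>x. f x - S n x) = inner_L2 \<mu> f f - (\<Sum>m<n. (d m)\<^sup>2)"
          unfolding S_def du by (rule bessel_id) (auto simp: orthu intro: u f)
        moreover have "inner_L2 \<mu> (\<lambda>x. f x - S n x) (\<lambda>x. f x - S n x) = inner_L2 \<mu> (\<lambda>x. g x - S n x) (\<lambda>x. g x - S n x)"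
          by (rule inner_cong_AE) (use AEfg in auto)
        ultimately show ?thesis by simp
      qed
      have "(\<lambda>n. inner_L2 \<mu> f f - (\<Sum>m<n. (d m)\<^sup>2)) \<longlonglongrightarrow> 0" unfolding eqn by (rule glim)
      then have "(\<lambda>n. inner_L2 \<mu> f f - (inner_L2 \<mu> f f - (\<Sum>m<n. (d m)\<^sup>2))) \<longlonglongrightarrow> inner_L2 \<mu> f f - 0"
        by (intro tendsto_diff tendsto_const)
      then have lim2: "(\<lambda>n. \<Sum>m<n. (d m)\<^sup>2) \<longlonglongrightarrow> inner_L2 \<mu> f f" by simp
      show ?thesis
      proof (rule tendsto_upperbound[OF lim2 _ trivial_limit_sequentially])
        show "\<forall>\<^sub>F n in sequentially. (\<Sum>m<n. (d m)\<^sup>2) \<le> s"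
          by (intro always_eventually allI) (simp add: psum sub)
      qed
    qed
  qed
  from hs le1 le2 show ?thesis unfolding c_def by simp
qed

lemma has_sum_sum_fun:
  fixes f :: "'i \<Rightarrow> 'a \<Rightarrow> real"
  assumes "finite I" "\<And>i. i \<in> I \<Longrightarrow> (f i has_sum s i) A"
  shows "((\<lambda>k. \<Sum>i\<in>I. f i k) has_sum (\<Sum>i\<in>I. s i)) A"
  using assms
proof (induction I rule: finite_induct)
  case empty then show ?case by simp
next
  case (insert a I)
  have "((\<lambda>k. f a k + (\<Sum>i\<in>I. f i k)) has_sum (s a + (\<Sum>i\<in>I. s i))) A"
    by (rule has_sum_add) (use insert in auto)
  then show ?case using insert by simp
qed

lemma L2_distr:
  assumes T: "T \<in> measurable M N" and f: "L2mem (distr M N T) f"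
  shows "L2mem M (\<lambda>x. f (T x))"
proof -
  have fm: "f \<in> borel_measurable N"
    using f unfolding L2mem_def by (simp cong: measurable_cong_sets)
  have "integrable (distr M N T) (\<lambda>y. (f y)\<^sup>2)" using f unfolding L2mem_def by simp
  then have "integrable M (\<lambda>x. (f (T x))\<^sup>2)"
    by (subst (asm) integrable_distr_eq[OF T]) (use fm in measurable)
  moreover have "(\<lambda>x. f (T x)) \<in> borel_measurable M" using measurable_compose[OF T fm] .
  ultimately show ?thesis unfolding L2mem_def by simp
qed

lemma L2_distr_meas:
  assumes f: "L2mem (distr M N T) f"
  shows "f \<in> borel_measurable N"
  using f unfolding L2mem_def by (simp cong: measurable_cong_sets)

lemma inner_distr:
  assumes T: "T \<in> measurable M N" and f: "f \<in> borel_measurable N" and g: "g \<in> borel_measurable N"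
  shows "inner_L2 (distr M N T) f g = inner_L2 M (\<lambda>x. f (T x)) (\<lambda>x. g (T x))"
  unfolding inner_L2_def by (rule integral_distr[OF T]) (use f g in measurable)

lemma integral_double_sum:
  fixes f :: "'i \<Rightarrow> 'j \<Rightarrow> 'a \<Rightarrow> real"
  assumes "\<And>i j. integrable \<mu> (f i j)"
  shows "(\<integral>x. (\<Sum>i\<in>I. \<Sum>j\<in>J. c i j * f i j x) \<partial>\<mu>) = (\<Sum>i\<in>I. \<Sum>j\<in>J. c i j * integral\<^sup>L \<mu> (f i j))"
proof -
  have i1: "integrable \<mu> (\<lambda>x. \<Sum>j\<in>J. c i j * f i j x)" for i
    by (rule Bochner_Integration.integrable_sum[where f="\<lambda>j x. c i j * f i j x"]) (use assms in auto)
  have "(\<integral>x. (\<Sum>i\<in>I. \<Sum>j\<in>J. c i j * f i j x) \<partial>\<mu>) = (\<Sum>i\<in>I. (\<integral>x. (\<Sum>j\<in>J. c i j * f i j x) \<partial>\<mu>))"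
    by (rule Bochner_Integration.integral_sum[where f="\<lambda>i x. \<Sum>j\<in>J. c i j * f i j x"]) (rule i1)
  also have "\<dots> = (\<Sum>i\<in>I. \<Sum>j\<in>J. (\<integral>x. c i j * f i j x \<partial>\<mu>))"
  proof (rule sum.cong[OF refl])
    fix i
    show "(\<integral>x. (\<Sum>j\<in>J. c i j * f i j x) \<partial>\<mu>) = (\<Sum>j\<in>J. (\<integral>x. c i j * f i j x \<partial>\<mu>))"
      by (rule Bochner_Integration.integral_sum[where f="\<lambda>j x. c i j * f i j x"])
         (use assms in auto)
  qed
  also have "\<dots> = (\<Sum>i\<in>I. \<Sum>j\<in>J. c i j * integral\<^sup>L \<mu> (f i j))"
    by (simp only: integral_mult_right_zero)
  finally show ?thesis .
qed

lemma sq_sum_expand: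
  fixes a b :: "'d \<Rightarrow> real"
  shows "(\<Sum>i\<in>I. a i * b i)\<^sup>2 = (\<Sum>i\<in>I. \<Sum>j\<in>I. (a i * a j) * (b i * b j))"
  by (simp add: power2_eq_square sum_product algebra_simps)

theorem mainTheorem3:
  fixes M :: "'w measure" and MX :: "'x measure" and MZ :: "'z measure"
    and X :: "'w \<Rightarrow> 'x" and Z :: "'w \<Rightarrow> 'z"
    and \<phi> :: "'x \<Rightarrow> real^'d" and \<psi> :: "'z \<Rightarrow> real^'d"
    and e :: "'i \<Rightarrow> 'x \<Rightarrow> real"
  assumes "prob_space M"
    and "X \<in> measurable M MX" and "Z \<in> measurable M MZ"
    and "\<forall>i. L2mem (distr M MX X) (\<lambda>x. \<phi> x $ i)"
    and "\<forall>i. L2mem (distr M MZ Z) (\<lambda>z. \<psi> z $ i)"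
    and "ONB_L2 (distr M MX X) e"
  shows "hs_inner M e (Td M X Z MX \<phi> \<psi>) (Td M X Z MX \<phi> \<psi>)
           - 2 * hs_inner M e (Td M X Z MX \<phi> \<psi>) (condT M X Z MZ)
         = (\<integral>x. (\<integral>z. (\<phi> x \<bullet> \<psi> z)\<^sup>2 \<partial>(distr M MZ Z)) \<partial>(distr M MX X))
           - 2 * (\<integral>\<omega>. \<phi> (X \<omega>) \<bullet> \<psi> (Z \<omega>) \<partial>M)"
proof -
  interpret M: prob_space M by (rule assms(1))
  define \<mu>X where "\<mu>X = distr M MX X"
  define \<mu>Z where "\<mu>Z = distr M MZ Z"
  have Xm[measurable]: "X \<in> measurable M MX" and Zm[measurable]: "Z \<in> measurable M MZ"
    using assms(2,3) .
  have probX: "prob_space \<mu>X" unfolding \<mu>X_def by (rule M.prob_space_distr[OF Xm])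
  have onb: "ONB_L2 \<mu>X e" using assms(6) unfolding \<mu>X_def .
  have e: "\<And>k. L2mem \<mu>X (e k)"
    and orth: "\<And>k l. inner_L2 \<mu>X (e k) (e l) = (if k = l then 1 else 0)"
    using onb unfolding ONB_L2_def by blast+
  have phi: "\<And>i. L2mem \<mu>X (\<lambda>x. \<phi> x $ i)" using assms(4) unfolding \<mu>X_def by blast
  have psi: "\<And>i. L2mem \<mu>Z (\<lambda>z. \<psi> z $ i)" using assms(5) unfolding \<mu>Z_def by blast
  have em[measurable]: "\<And>k. e k \<in> borel_measurable MX"
    using e L2_distr_meas unfolding \<mu>X_def by blast
  have phim[measurable]: "\<And>i. (\<lambda>x. \<phi> x $ i) \<in> borel_measurable MX"
    using phi L2_distr_meas unfolding \<mu>X_def by blast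
  have psim[measurable]: "\<And>i. (\<lambda>z. \<psi> z $ i) \<in> borel_measurable MZ"
    using psi L2_distr_meas unfolding \<mu>Z_def by blast
  define E where "E k = (\<lambda>\<omega>. e k (X \<omega>))" for k
  define Fp where "Fp i = (\<lambda>\<omega>. \<phi> (X \<omega>) $ i)" for i
  define Gp where "Gp i = (\<lambda>\<omega>. \<psi> (Z \<omega>) $ i)" for i
  have LE: "L2mem M (E k)" for k unfolding E_def by (rule L2_distr[OF Xm e[unfolded \<mu>X_def]])
  have LF: "L2mem M (Fp i)" for i unfolding Fp_def by (rule L2_distr[OF Xm phi[unfolded \<mu>X_def]])
  have LG: "L2mem M (Gp i)" for i unfolding Gp_def by (rule L2_distr[OF Zm psi[unfolded \<mu>Z_def]])
  define a where "a k i = inner_L2 \<mu>X (e k) (\<lambda>x. \<phi> x $ i)" for k i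
  have aE: "a k i = inner_L2 M (E k) (Fp i)" for k i
    unfolding a_def E_def Fp_def \<mu>X_def by (rule inner_distr[OF Xm]) measurable
  define G where "G i j = inner_L2 M (Gp i) (Gp j)" for i j
  have Gz: "inner_L2 \<mu>Z (\<lambda>z. \<psi> z $ i) (\<lambda>z. \<psi> z $ j) = G i j" for i j
    unfolding G_def Gp_def \<mu>Z_def by (rule inner_distr[OF Zm]) measurable
  have Td_eq: "Td M X Z MX \<phi> \<psi> (e k) = (\<lambda>\<omega>. \<Sum>i\<in>UNIV. a k i * Gp i \<omega>)" for k
    unfolding Td_def a_def Gp_def \<mu>X_def ..

  have t1k: "inner_L2 M (Td M X Z MX \<phi> \<psi> (e k)) (Td M X Z MX \<phi> \<psi> (e k))
      = (\<Sum>i\<in>UNIV. \<Sum>j\<in>UNIV. a k i * a k j * G i j)" for k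
  proof -
    have LT: "L2mem M (\<lambda>\<omega>. \<Sum>i\<in>UNIV. a k i * Gp i \<omega>)" by (rule L2_sum) (auto intro: LG simp: finite_UNIV)
    have "inner_L2 M (\<lambda>\<omega>. \<Sum>i\<in>UNIV. a k i * Gp i \<omega>) (\<lambda>\<omega>. \<Sum>i\<in>UNIV. a k i * Gp i \<omega>)
        = (\<Sum>i\<in>UNIV. a k i * inner_L2 M (Gp i) (\<lambda>\<omega>. \<Sum>j\<in>UNIV. a k j * Gp j \<omega>))"
      by (rule inner_sum_left) (auto intro: LG LT simp: finite_UNIV)
    also have "\<dots> = (\<Sum>i\<in>UNIV. a k i * (\<Sum>j\<in>UNIV. a k j * G i j))"
      unfolding G_def by (subst inner_sum_right) (auto intro: LG simp: finite_UNIV)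
    also have "\<dots> = (\<Sum>i\<in>UNIV. \<Sum>j\<in>UNIV. a k i * a k j * G i j)"
      by (simp add: sum_distrib_left mult.assoc)
    finally show ?thesis unfolding Td_eq .
  qed
  have pars: "((\<lambda>k. (inner_L2 \<mu>X (e k) (\<lambda>x. \<phi> x $ i))\<^sup>2) has_sum inner_L2 \<mu>X (\<lambda>x. \<phi> x $ i) (\<lambda>x. \<phi> x $ i)) UNIV" for i
    by (rule parseval[OF probX onb phi])
  have aa: "((\<lambda>k. a k i * a k j) has_sum inner_L2 \<mu>X (\<lambda>x. \<phi> x $ i) (\<lambda>x. \<phi> x $ j)) UNIV" for i j
    unfolding a_def by (rule ortho_has_sum[OF e orth phi phi pars])
  have has1: "((\<lambda>k. inner_L2 M (Td M X Z MX \<phi> \<psi> (e k)) (Td M X Z MX \<phi> \<psi> (e k)))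
      has_sum (\<Sum>i\<in>UNIV. \<Sum>j\<in>UNIV. inner_L2 \<mu>X (\<lambda>x. \<phi> x $ i) (\<lambda>x. \<phi> x $ j) * G i j)) UNIV"
    unfolding t1k
    by (intro has_sum_sum_fun has_sum_cmult_left aa) simp_all
  have rhs1: "(\<integral>x. (\<integral>z. (\<phi> x \<bullet> \<psi> z)\<^sup>2 \<partial>\<mu>Z) \<partial>\<mu>X)
      = (\<Sum>i\<in>UNIV. \<Sum>j\<in>UNIV. inner_L2 \<mu>X (\<lambda>x. \<phi> x $ i) (\<lambda>x. \<phi> x $ j) * G i j)"
  proof -
    have inner_eq: "(\<integral>z. (\<phi> x \<bullet> \<psi> z)\<^sup>2 \<partial>\<mu>Z) = (\<Sum>i\<in>UNIV. \<Sum>j\<in>UNIV. (\<phi> x $ i * \<phi> x $ j) * G i j)" for x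
    proof -
      have "(\<lambda>z. (\<phi> x \<bullet> \<psi> z)\<^sup>2) = (\<lambda>z. \<Sum>i\<in>UNIV. \<Sum>j\<in>UNIV. (\<phi> x $ i * \<phi> x $ j) * (\<psi> z $ i * \<psi> z $ j))"
        by (rule ext) (simp only: inner_vec_def inner_real_def sq_sum_expand)
      then have "(\<integral>z. (\<phi> x \<bullet> \<psi> z)\<^sup>2 \<partial>\<mu>Z)
          = (\<Sum>i\<in>UNIV. \<Sum>j\<in>UNIV. (\<phi> x $ i * \<phi> x $ j) * (\<integral>z. \<psi> z $ i * \<psi> z $ j \<partial>\<mu>Z))"
        using integral_double_sum[of \<mu>Z "\<lambda>i j z. \<psi> z $ i * \<psi> z $ j" "\<lambda>i j. \<phi> x $ i * \<phi> x $ j" UNIV UNIV]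
          L2_prod_int[OF psi psi] by simp
      also have "\<dots> = (\<Sum>i\<in>UNIV. \<Sum>j\<in>UNIV. (\<phi> x $ i * \<phi> x $ j) * G i j)"
        using Gz unfolding inner_L2_def by simp
      finally show ?thesis .
    qed
    have "(\<integral>x. (\<integral>z. (\<phi> x \<bullet> \<psi> z)\<^sup>2 \<partial>\<mu>Z) \<partial>\<mu>X)
        = (\<integral>x. (\<Sum>i\<in>UNIV. \<Sum>j\<in>UNIV. G i j * (\<phi> x $ i * \<phi> x $ j)) \<partial>\<mu>X)"
      unfolding inner_eq by (simp only: mult.commute)
    also have "\<dots> = (\<Sum>i\<in>UNIV. \<Sum>j\<in>UNIV. G i j * (\<integral>x. \<phi> x $ i * \<phi> x $ j \<partial>\<mu>X))"
      using integral_double_sum[of \<mu>X "\<lambda>i j x. \<phi> x $ i * \<phi> x $ j" G UNIV UNIV]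
        L2_prod_int[OF phi phi] by simp
    also have "\<dots> = (\<Sum>i\<in>UNIV. \<Sum>j\<in>UNIV. inner_L2 \<mu>X (\<lambda>x. \<phi> x $ i) (\<lambda>x. \<phi> x $ j) * G i j)"
      unfolding inner_L2_def by (simp only: mult.commute)
    finally show ?thesis .
  qed

  define Fs where "Fs = vimage_algebra (space M) Z MZ"
  have subalg: "subalgebra M Fs"
    unfolding subalgebra_def Fs_def using sets_image_in_sets[OF refl Zm] by auto
  have "finite_measure_subalgebra M Fs"
    unfolding finite_measure_subalgebra_def finite_measure_subalgebra_axioms_def
    using subalg M.finite_measure_axioms by simp
  then interpret CE: sigma_finite_subalgebra M Fs by (rule finite_measure_subalgebra_is_sigma_finite)
  have GpF: "Gp i \<in> borel_measurable Fs" for i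
  proof -
    have "Z \<in> measurable Fs MZ" unfolding Fs_def
      by (rule measurable_vimage_algebra1) (use measurable_space[OF Zm] in blast)
    then show ?thesis unfolding Gp_def by (rule measurable_compose) (rule psim)
  qed
  have Em: "E k \<in> borel_measurable M" for k using LE L2_meas by blast
  define b where "b k i = inner_L2 M (E k) (Gp i)" for k i
  have t2k: "inner_L2 M (Td M X Z MX \<phi> \<psi> (e k)) (condT M X Z MZ (e k)) = (\<Sum>i\<in>UNIV. a k i * b k i)" for k
  proof -
    define C where "C = real_cond_exp M Fs (E k)"
    have cT: "condT M X Z MZ (e k) = C" unfolding condT_def C_def Fs_def E_def ..
    have ce: "integrable M (\<lambda>\<omega>. Gp i \<omega> * C \<omega>) \<and> (\<integral>\<omega>. Gp i \<omega> * C \<omega> \<partial>M) = (\<integral>\<omega>. Gp i \<omega> * E k \<omega> \<partial>M)" for i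
      using CE.real_cond_exp_intg[OF L2_prod_int[OF LG LE] GpF Em] unfolding C_def by simp
    have "inner_L2 M (\<lambda>\<omega>. \<Sum>i\<in>UNIV. a k i * Gp i \<omega>) C = (\<integral>\<omega>. (\<Sum>i\<in>UNIV. a k i * (Gp i \<omega> * C \<omega>)) \<partial>M)"
      unfolding inner_L2_def by (simp only: sum_distrib_right mult.assoc)
    also have "\<dots> = (\<Sum>i\<in>UNIV. (\<integral>\<omega>. a k i * (Gp i \<omega> * C \<omega>) \<partial>M))"
      by (rule Bochner_Integration.integral_sum[where f="\<lambda>i \<omega>. a k i * (Gp i \<omega> * C \<omega>)"])
         (use ce in auto)
    also have "\<dots> = (\<Sum>i\<in>UNIV. a k i * b k i)"
      unfolding b_def inner_L2_def using ce by (simp add: mult.commute)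
    finally show ?thesis unfolding Td_eq cT .
  qed
  have orthE: "inner_L2 M (E k) (E l) = (if k = l then 1 else 0)" for k l
  proof -
    have "inner_L2 M (E k) (E l) = inner_L2 \<mu>X (e k) (e l)"
      unfolding E_def \<mu>X_def by (rule inner_distr[OF Xm, symmetric]) measurable
    then show ?thesis using orth by simp
  qed
  have FF: "inner_L2 M (Fp i) (Fp i) = inner_L2 \<mu>X (\<lambda>x. \<phi> x $ i) (\<lambda>x. \<phi> x $ i)" for i
    unfolding Fp_def \<mu>X_def by (rule inner_distr[OF Xm, symmetric]) measurable
  have parsM: "((\<lambda>k. (inner_L2 M (E k) (Fp i))\<^sup>2) has_sum inner_L2 M (Fp i) (Fp i)) UNIV" for i
    using pars[of i] unfolding FF aE[symmetric] a_def .
  have ab: "((\<lambda>k. a k i * b k i) has_sum inner_L2 M (Fp i) (Gp i)) UNIV" for i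
    unfolding aE b_def by (rule ortho_has_sum[OF LE orthE LF LG parsM])
  have has2: "((\<lambda>k. inner_L2 M (Td M X Z MX \<phi> \<psi> (e k)) (condT M X Z MZ (e k)))
      has_sum (\<Sum>i\<in>UNIV. inner_L2 M (Fp i) (Gp i))) UNIV"
    unfolding t2k by (intro has_sum_sum_fun ab) simp_all
  have rhs2: "(\<integral>\<omega>. \<phi> (X \<omega>) \<bullet> \<psi> (Z \<omega>) \<partial>M) = (\<Sum>i\<in>UNIV. inner_L2 M (Fp i) (Gp i))"
  proof -
    have "(\<integral>\<omega>. \<phi> (X \<omega>) \<bullet> \<psi> (Z \<omega>) \<partial>M) = (\<integral>\<omega>. (\<Sum>i\<in>UNIV. Fp i \<omega> * Gp i \<omega>) \<partial>M)"
      unfolding inner_vec_def inner_real_def Fp_def Gp_def ..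
    also have "\<dots> = (\<Sum>i\<in>UNIV. inner_L2 M (Fp i) (Gp i))"
      unfolding inner_L2_def
      by (rule Bochner_Integration.integral_sum[where f="\<lambda>i \<omega>. Fp i \<omega> * Gp i \<omega>"])
         (rule L2_prod_int[OF LF LG])
    finally show ?thesis .
  qed
  have h1: "hs_inner M e (Td M X Z MX \<phi> \<psi>) (Td M X Z MX \<phi> \<psi>)
      = (\<Sum>i\<in>UNIV. \<Sum>j\<in>UNIV. inner_L2 \<mu>X (\<lambda>x. \<phi> x $ i) (\<lambda>x. \<phi> x $ j) * G i j)"
    unfolding hs_inner_def by (rule infsumI[OF has1])
  have h2: "hs_inner M e (Td M X Z MX \<phi> \<psi>) (condT M X Z MZ) = (\<Sum>i\<in>UNIV. inner_L2 M (Fp i) (Gp i))"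
    unfolding hs_inner_def by (rule infsumI[OF has2])
  show ?thesis
    unfolding h1 h2 rhs2 rhs1[unfolded \<mu>X_def \<mu>Z_def] \<mu>X_def ..
qed

end
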